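(* Suppose that $$\forall\,\varepsilon>0\;\exists\,\delta>0\ \text{such that}\ j(\varphi,\psi)\le\varepsilon\ \ \forall\,(\varphi,\psi)\in U_+\ \text{with}\ \|\varphi\|_0\le\delta ,$$ and that $j(\varphi,0)>0$ whenever $\varphi$ is a strictly positive constant function. Then for every solution $x=(w,v)^\phi$, $\phi\in X_+$, of $w'(t)=q(v(t))w(t)$, $v'(t)=j(w_t,v_t)-\mu v(t)$ one has $x_t\to0$ as $t\to\infty$ in both the $C$-norm and the $C^1$-norm.
   Context: Let $h>0$, $R_-<0$, $I=(R_-,\infty)$, $q:I\to\mathbb{R}$, $\mu>0$, $U=C^1([-h,0],\mathbb{R})\times C^1([-h,0],I)$, $j:U\to\mathbb{R}$, $U_+=C^1([-h,0],\mathbb{R}_+^2)$, $\|\cdot\|_0$ the sup-norm, $\|\phi\|_1=\|\phi\|_0+\|\phi'\|_0$; $x_t(s)=x(t+s)$. Define $F(\varphi,\psi)=(q(\psi(0))\varphi(0),\,j(\varphi,\psi)-\mu\psi(0))$ and $X_+=\{\phi\in C^1([-h,0],\mathbb{R}_+^2):\phi'(0)=F(\phi)\}\neq\emptyset$. Assume: $j$ is $C^1$ on $U$ with each derivative extending to a linear map on $C([-h,0],\mathbb{R}^2)$ depending continuously on $(\phi,\chi)$; for every bounded $B\subset U_+$ there is $L_B$ with $|j(\phi)-j(\chi)|\le L_B\|\phi-\chi\|_0$ on $B$; $j\ge0$ on $U_+$; $j(B_1\times B_2)$ is bounded whenever $B_1\times B_2\subset U_+$ with $B_1$ bounded; $q$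 is bounded and $C^1$; and $q(s)<0$ for all $s>0$. Solutions from $X_+$ exist globally and remain nonnegative. *)

theory Defs
  imports "HOL-Analysis.Analysis"
begin

text \<open>History segments are functions real => real, of which only the values
on [-h,0] matter.  Pairs (phi,psi) of segments are the two components of an
R^2-valued segment.\<close>

definition C1h :: "real \<Rightarrow> (real \<Rightarrow> real) \<Rightarrow> bool" where
  "C1h h f \<longleftrightarrow> (\<exists>d. (\<forall>s\<in>{-h..0}. (f has_real_derivative d s) (at s within {-h..0}))
                   \<and> continuous_on {-h..0} d)"

definition derh :: "real \<Rightarrow> (real \<Rightarrow> real) \<Rightarrow> real \<Rightarrow> real" where
  "derh h f s = (SOME d. (f has_real_derivative d) (at s within {-h..0}))"

definition norm0 :: "real \<Rightarrow> (real \<Rightarrow> real) \<Rightarrow> real" where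
  "norm0 h f = (SUP s\<in>{-h..0}. \<bar>f s\<bar>)"

definition norm1 :: "real \<Rightarrow> (real \<Rightarrow> real) \<Rightarrow> real" where
  "norm1 h f = norm0 h f + norm0 h (derh h f)"

definition pnorm0 :: "real \<Rightarrow> (real \<Rightarrow> real) \<Rightarrow> (real \<Rightarrow> real) \<Rightarrow> real" where
  "pnorm0 h f g = max (norm0 h f) (norm0 h g)"

definition pnorm1 :: "real \<Rightarrow> (real \<Rightarrow> real) \<Rightarrow> (real \<Rightarrow> real) \<Rightarrow> real" where
  "pnorm1 h f g = max (norm1 h f) (norm1 h g)"

definition seg :: "(real \<Rightarrow> real) \<Rightarrow> real \<Rightarrow> (real \<Rightarrow> real)" where
  "seg x t = (\<lambda>s. x (t + s))"

definition U :: "real \<Rightarrow> real \<Rightarrow> ((real \<Rightarrow> real) \<times> (real \<Rightarrow> real)) set" where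
  "U h Rm = {(f, g). C1h h f \<and> C1h h g \<and> (\<forall>s\<in>{-h..0}. g s > Rm)}"

definition Uplus :: "real \<Rightarrow> ((real \<Rightarrow> real) \<times> (real \<Rightarrow> real)) set" where
  "Uplus h = {(f, g). C1h h f \<and> C1h h g \<and> (\<forall>s\<in>{-h..0}. f s \<ge> 0 \<and> g s \<ge> 0)}"

definition Xplus :: "real \<Rightarrow> real \<Rightarrow> (real \<Rightarrow> real) \<Rightarrow> real
    \<Rightarrow> ((real \<Rightarrow> real) \<Rightarrow> (real \<Rightarrow> real) \<Rightarrow> real) \<Rightarrow> ((real \<Rightarrow> real) \<times> (real \<Rightarrow> real)) set" where
  "Xplus h Rm q \<mu> j = {(f, g). (f, g) \<in> Uplus h \<and>
       derh h f 0 = q (g 0) * f 0 \<and> derh h g 0 = j f g - \<mu> * g 0}"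

definition bounded1 :: "real \<Rightarrow> ((real \<Rightarrow> real) \<times> (real \<Rightarrow> real)) set \<Rightarrow> bool" where
  "bounded1 h B \<longleftrightarrow> (\<exists>M. \<forall>(f, g)\<in>B. pnorm1 h f g \<le> M)"

definition bounded1s :: "real \<Rightarrow> (real \<Rightarrow> real) set \<Rightarrow> bool" where
  "bounded1s h B \<longleftrightarrow> (\<exists>M. \<forall>f\<in>B. norm1 h f \<le> M)"

definition j_extensional :: "real \<Rightarrow> ((real \<Rightarrow> real) \<Rightarrow> (real \<Rightarrow> real) \<Rightarrow> real) \<Rightarrow> bool" where
  "j_extensional h j \<longleftrightarrow> (\<forall>f g f' g'. (\<forall>s\<in>{-h..0}. f s = f' s \<and> g s = g' s) \<longrightarrow> j f g = j f' g')"

definition j_C1_ext :: "real \<Rightarrow> real \<Rightarrow> ((real \<Rightarrow> real) \<Rightarrow> (real \<Rightarrow> real) \<Rightarrow> real) \<Rightarrow> bool" where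
  "j_C1_ext h Rm j \<longleftrightarrow> (\<exists>Dj :: (real \<Rightarrow> real) \<Rightarrow> (real \<Rightarrow> real) \<Rightarrow> (real \<Rightarrow> real) \<Rightarrow> (real \<Rightarrow> real) \<Rightarrow> real.
     \<comment> \<open>Dj(f,g) only depends on values on [-h,0]\<close>
     (\<forall>(f, g)\<in>U h Rm. \<forall>a b a' b'. (\<forall>s\<in>{-h..0}. a s = a' s \<and> b s = b' s) \<longrightarrow> Dj f g a b = Dj f g a' b') \<and>
     \<comment> \<open>Dj(f,g) is linear on C([-h,0],R^2)\<close>
     (\<forall>(f, g)\<in>U h Rm. \<forall>a b a' b' c. continuous_on {-h..0} a \<and> continuous_on {-h..0} b \<and>
         continuous_on {-h..0} a' \<and> continuous_on {-h..0} b' \<longrightarrow>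
         Dj f g (\<lambda>s. a s + a' s) (\<lambda>s. b s + b' s) = Dj f g a b + Dj f g a' b' \<and>
         Dj f g (\<lambda>s. c * a s) (\<lambda>s. c * b s) = c * Dj f g a b) \<and>
     \<comment> \<open>Dj(f,g) is bounded on C([-h,0],R^2)\<close>
     (\<forall>(f, g)\<in>U h Rm. \<exists>K. \<forall>a b. continuous_on {-h..0} a \<and> continuous_on {-h..0} b \<longrightarrow>
         \<bar>Dj f g a b\<bar> \<le> K * pnorm0 h a b) \<and>
     \<comment> \<open>Frechet differentiability of j on U (w.r.t. ||.||_1)\<close>
     (\<forall>(f, g)\<in>U h Rm. \<forall>e>0. \<exists>d>0. \<forall>a b. C1h h a \<and> C1h h b \<and> pnorm1 h a b < d \<longrightarrow>
         ((\<lambda>s. f s + a s), (\<lambda>s. g s + b s)) \<in> U h Rm \<longrightarrow>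
         \<bar>j (\<lambda>s. f s + a s) (\<lambda>s. g s + b s) - j f g - Dj f g a b\<bar> \<le> e * pnorm1 h a b) \<and>
     \<comment> \<open>the derivative U -> L(C^1,R) is continuous (operator norm)\<close>
     (\<forall>(f, g)\<in>U h Rm. \<forall>e>0. \<exists>d>0. \<forall>(f', g')\<in>U h Rm.
         pnorm1 h (\<lambda>s. f' s - f s) (\<lambda>s. g' s - g s) < d \<longrightarrow>
         (\<forall>a b. C1h h a \<and> C1h h b \<longrightarrow> \<bar>Dj f' g' a b - Dj f g a b\<bar> \<le> e * pnorm1 h a b)) \<and>
     \<comment> \<open>(f,g,chi) |-> Dj(f,g) chi continuous on U x C([-h,0],R^2)\<close>
     (\<forall>(f, g)\<in>U h Rm. \<forall>a b. continuous_on {-h..0} a \<and> continuous_on {-h..0} b \<longrightarrow>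
        (\<forall>e>0. \<exists>d>0. \<forall>(f', g')\<in>U h Rm. \<forall>a' b'.
           continuous_on {-h..0} a' \<and> continuous_on {-h..0} b' \<and>
           pnorm1 h (\<lambda>s. f' s - f s) (\<lambda>s. g' s - g s) < d \<and>
           pnorm0 h (\<lambda>s. a' s - a s) (\<lambda>s. b' s - b s) < d \<longrightarrow>
           \<bar>Dj f' g' a' b' - Dj f g a b\<bar> < e)))"

definition j_lipschitz_bounded :: "real \<Rightarrow> ((real \<Rightarrow> real) \<Rightarrow> (real \<Rightarrow> real) \<Rightarrow> real) \<Rightarrow> bool" where
  "j_lipschitz_bounded h j \<longleftrightarrow> (\<forall>B. B \<subseteq> Uplus h \<and> bounded1 h B \<longrightarrow>
     (\<exists>L. \<forall>(f, g)\<in>B. \<forall>(f', g')\<in>B.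
        \<bar>j f g - j f' g'\<bar> \<le> L * pnorm0 h (\<lambda>s. f s - f' s) (\<lambda>s. g s - g' s)))"

definition j_bounded_products :: "real \<Rightarrow> ((real \<Rightarrow> real) \<Rightarrow> (real \<Rightarrow> real) \<Rightarrow> real) \<Rightarrow> bool" where
  "j_bounded_products h j \<longleftrightarrow> (\<forall>B1 B2. B1 \<times> B2 \<subseteq> Uplus h \<and> bounded1s h B1 \<longrightarrow>
     (\<exists>M. \<forall>f\<in>B1. \<forall>g\<in>B2. \<bar>j f g\<bar> \<le> M))"

definition q_bounded_C1 :: "real \<Rightarrow> (real \<Rightarrow> real) \<Rightarrow> bool" where
  "q_bounded_C1 Rm q \<longleftrightarrow> (\<exists>M. \<forall>s\<in>{Rm<..}. \<bar>q s\<bar> \<le> M) \<and>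
     (\<exists>q'. (\<forall>s\<in>{Rm<..}. (q has_real_derivative q' s) (at s)) \<and> continuous_on {Rm<..} q')"

definition is_solution :: "real \<Rightarrow> real \<Rightarrow> (real \<Rightarrow> real) \<Rightarrow> real
    \<Rightarrow> ((real \<Rightarrow> real) \<Rightarrow> (real \<Rightarrow> real) \<Rightarrow> real)
    \<Rightarrow> (real \<Rightarrow> real) \<Rightarrow> (real \<Rightarrow> real) \<Rightarrow> (real \<Rightarrow> real) \<Rightarrow> (real \<Rightarrow> real) \<Rightarrow> bool" where
  "is_solution h Rm q \<mu> j f g w v \<longleftrightarrow>
     (\<forall>s\<in>{-h..0}. w s = f s \<and> v s = g s) \<and>
     (\<forall>t\<ge>0. (seg w t, seg v t) \<in> U h Rm) \<and>
     (\<forall>t\<ge>0. (w has_real_derivative (q (v t) * w t)) (at t within {-h..}) \<and>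
             (v has_real_derivative (j (seg w t) (seg v t) - \<mu> * v t)) (at t within {-h..}))"

end

theory Submission imports Defs begin
lemma norm0_le:
  assumes "h \<ge> 0" "\<And>s. s \<in> {-h..0} \<Longrightarrow> \<bar>f s\<bar> \<le> e"
  shows "0 \<le> norm0 h f \<and> norm0 h f \<le> e"
proof -
  have ne: "{-h..0::real} \<noteq> {}" using assms(1) by auto
  have bdd: "bdd_above ((\<lambda>s. \<bar>f s\<bar>) ` {-h..0})"
    using assms(2) by (intro bdd_aboveI2) auto
  have "\<bar>f 0\<bar> \<le> norm0 h f" unfolding norm0_def
    using assms(1) by (intro cSUP_upper[OF _ bdd]) auto
  moreover have "norm0 h f \<le> e" unfolding norm0_def
    using ne assms(2) by (intro cSUP_least) auto
  ultimately show ?thesis by linarith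
qed

lemma derh_eq:
  assumes "h > 0" "s \<in> {-h..0}" "(f has_real_derivative d) (at s within {-h..0})"
  shows "derh h f s = d"
  unfolding derh_def
proof (rule some_equality)
  show "(f has_real_derivative d) (at s within {-h..0})" by fact
  fix d' assume "(f has_real_derivative d') (at s within {-h..0})"
  then show "d' = d" using assms
    vector_derivative_unique_within_closed_interval[of "-h" 0 s f d' d]
    by (auto simp: has_real_derivative_iff_has_vector_derivative)
qed

lemma C1h_const: "C1h h (\<lambda>_. c)"
  unfolding C1h_def by (rule exI[of _ "\<lambda>_. 0"]) auto

lemma derh_const: "h > 0 \<Longrightarrow> s \<in> {-h..0} \<Longrightarrow> derh h (\<lambda>_. c) s = 0"
  by (rule derh_eq) auto

lemma cmp_upper:
  fixes y y' :: "real \<Rightarrow> real"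
  assumes "a \<le> b" "k > 0" "continuous_on {a..b} y"
    "\<And>t. a < t \<Longrightarrow> t < b \<Longrightarrow> (y has_real_derivative y' t) (at t)"
    "\<And>t. a < t \<Longrightarrow> t < b \<Longrightarrow> y' t \<le> c - k * y t"
  shows "y b \<le> c/k + (y a - c/k) * exp (-k*(b-a))"
proof -
  define z where "z t = (y t - c/k) * exp (k*t)" for t
  have "z b \<le> z a"
  proof (rule DERIV_nonpos_imp_decreasing_open[OF assms(1)])
    fix x assume x: "a < x" "x < b"
    have "(z has_real_derivative (y' x * exp (k*x) + (y x - c/k) * (exp (k*x) * k))) (at x)"
      unfolding z_def by (auto intro!: derivative_eq_intros assms(4)[OF x])
    moreover have "y' x * exp (k*x) + (y x - c/k) * (exp (k*x) * k) = (y' x - (c - k * y x)) * exp (k*x)"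
      using assms(2) by (simp add: field_simps)
    moreover have "(y' x - (c - k * y x)) * exp (k*x) \<le> 0"
      using assms(5)[OF x] by (simp add: mult_nonpos_nonneg)
    ultimately show "\<exists>d. (z has_real_derivative d) (at x) \<and> d \<le> 0" by auto
  next
    show "continuous_on {a..b} z" unfolding z_def
      by (intro continuous_intros assms(3))
  qed
  then have "(y b - c/k) * exp (k*b) \<le> (y a - c/k) * exp (k*a)" by (simp add: z_def)
  then have "(y b - c/k) * exp (k*b) * exp (-k*b) \<le> (y a - c/k) * exp (k*a) * exp (-k*b)"
    by (intro mult_right_mono) auto
  then have "y b - c/k \<le> (y a - c/k) * exp (-k*(b-a))"
    by (simp add: mult.assoc flip: exp_add) (simp add: algebra_simps)
  then show ?thesis by simp
qed

lemma cmp_lower: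
  fixes y y' :: "real \<Rightarrow> real"
  assumes "a \<le> b" "k > 0" "continuous_on {a..b} y"
    "\<And>t. a < t \<Longrightarrow> t < b \<Longrightarrow> (y has_real_derivative y' t) (at t)"
    "\<And>t. a < t \<Longrightarrow> t < b \<Longrightarrow> y' t \<ge> c - k * y t"
  shows "y b \<ge> c/k + (y a - c/k) * exp (-k*(b-a))"
proof -
  have "(\<lambda>t. - y t) b \<le> (-c)/k + ((\<lambda>t. - y t) a - (-c)/k) * exp (-k*(b-a))"
  proof (rule cmp_upper[OF assms(1,2), where y'="\<lambda>t. - y' t"])
    show "continuous_on {a..b} (\<lambda>t. - y t)" by (intro continuous_intros assms(3))
    fix t assume t: "a < t" "t < b"
    show "((\<lambda>t. - y t) has_real_derivative - y' t) (at t)"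
      by (intro derivative_intros assms(4)[OF t])
    show "- y' t \<le> - c - k * - y t" using assms(5)[OF t] by simp
  qed
  then show ?thesis by (simp add: algebra_simps)
qed

lemma exp_neg_le: "(x::real) \<ge> 0 \<Longrightarrow> exp (-x) \<le> 1 / (1 + x)"
proof -
  assume x: "x \<ge> 0"
  have "1 + x \<le> exp x" by (rule exp_ge_add_one_self)
  then have "1 / exp x \<le> 1 / (1 + x)" using x by (intro divide_left_mono) auto
  then show ?thesis by (simp add: exp_minus field_simps)
qed


theorem proposition2:
  fixes h Rm \<mu> :: real
    and q :: "real \<Rightarrow> real"
    and j :: "(real \<Rightarrow> real) \<Rightarrow> (real \<Rightarrow> real) \<Rightarrow> real"
    and f g w v :: "real \<Rightarrow> real"
  assumes h_pos: "h > 0" and Rm_neg: "Rm < 0" and mu_pos: "\<mu> > 0"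
    and j_ext: "j_extensional h j"
    and j_C1: "j_C1_ext h Rm j"
    and j_lip: "j_lipschitz_bounded h j"
    and j_nonneg: "\<forall>(a, b)\<in>Uplus h. j a b \<ge> 0"
    and j_bdd: "j_bounded_products h j"
    and q_reg: "q_bounded_C1 Rm q"
    and q_neg: "\<forall>s>0. q s < 0"
    and X_ne: "Xplus h Rm q \<mu> j \<noteq> {}"
    and glob_ex: "\<forall>(a, b)\<in>Xplus h Rm q \<mu> j. \<exists>w' v'. is_solution h Rm q \<mu> j a b w' v'"
    and glob_nonneg: "\<forall>(a, b)\<in>Xplus h Rm q \<mu> j. \<forall>w' v'. is_solution h Rm q \<mu> j a b w' v' \<longrightarrow>
                         (\<forall>t\<ge>-h. w' t \<ge> 0 \<and> v' t \<ge> 0)"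
    and small: "\<forall>\<epsilon>>0. \<exists>\<delta>>0. \<forall>(a, b)\<in>Uplus h. norm0 h a \<le> \<delta> \<longrightarrow> j a b \<le> \<epsilon>"
    and const_pos: "\<forall>c>0. j (\<lambda>_. c) (\<lambda>_. 0) > 0"
    and init: "(f, g) \<in> Xplus h Rm q \<mu> j"
    and sol: "is_solution h Rm q \<mu> j f g w v"
  shows "((\<lambda>t. pnorm0 h (seg w t) (seg v t)) \<longlongrightarrow> 0) at_top
         \<and> ((\<lambda>t. pnorm1 h (seg w t) (seg v t)) \<longlongrightarrow> 0) at_top"
proof -
  define wd where "wd t = q (v t) * w t" for t
  define J where "J t = j (seg w t) (seg v t)" for t
  define vd where "vd t = J t - \<mu> * v t" for t
  have solU: "\<And>t. t \<ge> 0 \<Longrightarrow> (seg w t, seg v t) \<in> U h Rm"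
    using sol unfolding is_solution_def by auto
  have solD: "\<And>t. t \<ge> 0 \<Longrightarrow> (w has_real_derivative wd t) (at t within {-h..}) \<and> (v has_real_derivative vd t) (at t within {-h..})"
    using sol unfolding is_solution_def wd_def vd_def J_def by auto
  have nn: "\<And>t. t \<ge> -h \<Longrightarrow> w t \<ge> 0 \<and> v t \<ge> 0"
    using glob_nonneg init sol by blast
  have atw: "\<And>t. t > 0 \<Longrightarrow> at t within {-h..} = at t"
    using h_pos by (intro at_within_interior) auto
  have Dw: "\<And>t. t > 0 \<Longrightarrow> (w has_real_derivative wd t) (at t)"
    using solD atw by (metis less_imp_le)
  have Dv: "\<And>t. t > 0 \<Longrightarrow> (v has_real_derivative vd t) (at t)"
    using solD atw by (metis less_imp_le)
  have contw: "\<And>a b. 0 \<le> a \<Longrightarrow> continuous_on {a..b} w"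
  proof -
    fix a b :: real assume a: "0 \<le> a"
    show "continuous_on {a..b} w" unfolding continuous_on_eq_continuous_within
    proof
      fix x assume x: "x \<in> {a..b}"
      then have "continuous (at x within {-h..}) w" using solD[of x] a by (auto intro: DERIV_continuous)
      then show "continuous (at x within {a..b}) w" by (rule continuous_within_subset) (use a h_pos in auto)
    qed
  qed
  have contv: "\<And>a b. 0 \<le> a \<Longrightarrow> continuous_on {a..b} v"
  proof -
    fix a b :: real assume a: "0 \<le> a"
    show "continuous_on {a..b} v" unfolding continuous_on_eq_continuous_within
    proof
      fix x assume x: "x \<in> {a..b}"
      then have "continuous (at x within {-h..}) v" using solD[of x] a by (auto intro: DERIV_continuous)
      then show "continuous (at x within {a..b}) v" by (rule continuous_within_subset) (use a h_pos in auto)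
    qed
  qed
  have UP: "\<And>t1 t2. t1 \<ge> 0 \<Longrightarrow> t2 \<ge> 0 \<Longrightarrow> (seg w t1, seg v t2) \<in> Uplus h"
  proof -
    fix t1 t2 :: real assume t: "t1 \<ge> 0" "t2 \<ge> 0"
    have "C1h h (seg w t1)" using solU[OF t(1)] by (auto simp: U_def)
    moreover have "C1h h (seg v t2)" using solU[OF t(2)] by (auto simp: U_def)
    moreover have "\<forall>s\<in>{-h..0}. seg w t1 s \<ge> 0 \<and> seg v t2 s \<ge> 0"
      using nn t by (auto simp: seg_def)
    ultimately show "(seg w t1, seg v t2) \<in> Uplus h" by (auto simp: Uplus_def)
  qed
  have Jnn: "\<And>t. t \<ge> 0 \<Longrightarrow> J t \<ge> 0"
    using UP j_nonneg unfolding J_def by blast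
  obtain Mq q' where Mq: "\<forall>s\<in>{Rm<..}. \<bar>q s\<bar> \<le> Mq" and
    q': "\<forall>s\<in>{Rm<..}. (q has_real_derivative q' s) (at s)"
    using q_reg unfolding q_bounded_C1_def by blast
  have qcont: "continuous_on {Rm<..} q"
    using q' by (intro continuous_at_imp_continuous_on) (auto intro: DERIV_isCont)
  have q0: "q 0 \<le> 0"
  proof -
    have "isCont q 0" using q' Rm_neg by (auto intro: DERIV_isCont)
    then have "(q \<longlongrightarrow> q 0) (at_right 0)"
      unfolding isCont_def by (rule tendsto_within_subset) auto
    moreover have "eventually (\<lambda>x. q x \<le> 0) (at_right (0::real))"
      using eventually_at_right_less[of "0::real"] by eventually_elim (simp add: q_neg less_imp_le)
    ultimately show ?thesis by (rule tendsto_upperbound) simp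
  qed
  have Mq_nn: "Mq \<ge> 0" using Mq Rm_neg by force
  have qv: "\<And>t. t \<ge> -h \<Longrightarrow> \<bar>q (v t)\<bar> \<le> Mq \<and> q (v t) \<le> 0"
  proof -
    fix t :: real assume "t \<ge> -h"
    then have "v t \<ge> 0" using nn by blast
    moreover have "v t > Rm" using \<open>v t \<ge> 0\<close> Rm_neg by linarith
    ultimately have "\<bar>q (v t)\<bar> \<le> Mq" using Mq by auto
    moreover have "q (v t) \<le> 0"
    proof (cases "v t = 0")
      case True then show ?thesis using q0 by simp
    next
      case False then show ?thesis using q_neg \<open>v t \<ge> 0\<close> by (simp add: less_imp_le)
    qed
    ultimately show "\<bar>q (v t)\<bar> \<le> Mq \<and> q (v t) \<le> 0" by blast
  qed
  have wd_le: "\<And>t. t \<ge> -h \<Longrightarrow> wd t \<le> 0 \<and> \<bar>wd t\<bar> \<le> Mq * w t"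
  proof -
    fix t :: real assume t: "t \<ge> -h"
    have "w t \<ge> 0" using nn t by blast
    moreover have "\<bar>wd t\<bar> = \<bar>q (v t)\<bar> * w t" using \<open>w t \<ge> 0\<close> unfolding wd_def by (simp add: abs_mult)
    moreover have "wd t \<le> 0" using qv[OF t] \<open>w t \<ge> 0\<close> unfolding wd_def
      by (simp add: mult_nonpos_nonneg)
    moreover have "\<bar>q (v t)\<bar> * w t \<le> Mq * w t" using mult_right_mono[OF conjunct1[OF qv[OF t]] \<open>w t \<ge> 0\<close>] .
    ultimately show "wd t \<le> 0 \<and> \<bar>wd t\<bar> \<le> Mq * w t" by simp
  qed
  have wmono: "\<And>a b. 0 \<le> a \<Longrightarrow> a \<le> b \<Longrightarrow> w b \<le> w a"
  proof -
    fix a b :: real assume ab: "0 \<le> a" "a \<le> b"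
    show "w b \<le> w a"
    proof (rule DERIV_nonpos_imp_decreasing_open[OF ab(2) _ contw[OF ab(1)]])
      fix x assume x: "a < x" "x < b"
      then have "x > 0" using ab by linarith
      then show "\<exists>y. (w has_real_derivative y) (at x) \<and> y \<le> 0"
        using Dw[of x] wd_le[of x] h_pos by auto
    qed
  qed
  have dsegw: "\<And>t s. t > h \<Longrightarrow> s \<in> {-h..0} \<Longrightarrow> derh h (seg w t) s = wd (t+s)"
  proof -
    fix t s :: real assume t: "t > h" and s: "s \<in> {-h..0}"
    have "(w has_real_derivative wd (s+t)) (at (s+t))" using Dw t s by auto
    then have "((\<lambda>x. w (x+t)) has_real_derivative wd (s+t)) (at s)" by (simp add: DERIV_shift)
    then have "(seg w t has_real_derivative wd (t+s)) (at s within {-h..0})"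
      unfolding seg_def by (simp add: add.commute has_field_derivative_at_within)
    then show "derh h (seg w t) s = wd (t+s)" using derh_eq h_pos s by blast
  qed
  have dsegv: "\<And>t s. t > h \<Longrightarrow> s \<in> {-h..0} \<Longrightarrow> derh h (seg v t) s = vd (t+s)"
  proof -
    fix t s :: real assume t: "t > h" and s: "s \<in> {-h..0}"
    have "(v has_real_derivative vd (s+t)) (at (s+t))" using Dv t s by auto
    then have "((\<lambda>x. v (x+t)) has_real_derivative vd (s+t)) (at s)" by (simp add: DERIV_shift)
    then have "(seg v t has_real_derivative vd (t+s)) (at s within {-h..0})"
      unfolding seg_def by (simp add: add.commute has_field_derivative_at_within)
    then show "derh h (seg v t) s = vd (t+s)" using derh_eq h_pos s by blast
  qed
  have w0: "w 0 \<ge> 0" using nn h_pos by auto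
  have nw1: "\<And>t. t > h \<Longrightarrow> norm1 h (seg w t) \<le> w 0 + Mq * w 0"
  proof -
    fix t :: real assume t: "t > h"
    have "norm0 h (seg w t) \<le> w 0"
      using norm0_le[of h "seg w t" "w 0"] h_pos nn wmono t by (auto simp: seg_def)
    moreover have "norm0 h (derh h (seg w t)) \<le> Mq * w 0"
    proof -
      have "\<bar>derh h (seg w t) s\<bar> \<le> Mq * w 0" if s: "s \<in> {-h..0}" for s
      proof -
        have "\<bar>derh h (seg w t) s\<bar> \<le> Mq * w (t+s)" using dsegw[OF t s] wd_le[of "t+s"] s t h_pos by auto
        also have "\<dots> \<le> Mq * w 0" using wmono[of 0 "t+s"] s t Mq_nn by (auto intro: mult_left_mono)
        finally show ?thesis .
      qed
      then show ?thesis using norm0_le[of h _ "Mq * w 0"] h_pos by auto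
    qed
    ultimately show "norm1 h (seg w t) \<le> w 0 + Mq * w 0" unfolding norm1_def by linarith
  qed
  obtain M where M: "\<forall>a\<in>seg w ` {h<..}. \<forall>b\<in>seg v ` {h<..}. \<bar>j a b\<bar> \<le> M"
  proof -
    have "seg w ` {h<..} \<times> seg v ` {h<..} \<subseteq> Uplus h" using UP h_pos by auto
    moreover have "bounded1s h (seg w ` {h<..})" unfolding bounded1s_def using nw1 by auto
    ultimately show ?thesis using j_bdd that unfolding j_bounded_products_def by blast
  qed
  have JM: "\<And>t. t > h \<Longrightarrow> \<bar>J t\<bar> \<le> M" using M unfolding J_def by auto
  have M_nn: "M \<ge> 0" using JM[of "h+1"] by auto
  define V where "V = M/\<mu> + v h"
  have vV: "\<And>b. b \<ge> h \<Longrightarrow> v b \<le> V"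
  proof -
    fix b :: real assume b: "b \<ge> h"
    have "v b \<le> M/\<mu> + (v h - M/\<mu>) * exp (-\<mu>*(b-h))"
    proof (rule cmp_upper[OF b mu_pos contv])
      show "0 \<le> h" using h_pos by simp
      fix t assume t: "h < t" "t < b"
      show "(v has_real_derivative vd t) (at t)" using Dv t h_pos by auto
      show "vd t \<le> M - \<mu> * v t" using JM[of t] t unfolding vd_def by auto
    qed
    moreover have "(v h - M/\<mu>) * exp (-\<mu>*(b-h)) \<le> v h"
    proof (cases "v h - M/\<mu> \<le> 0")
      case True then show ?thesis using nn[of h] h_pos by (smt (verit) exp_gt_zero mult_nonpos_nonneg)
    next
      case False
      have "exp (-\<mu>*(b-h)) \<le> 1" using mu_pos b by (simp add: mult_nonneg_nonneg)
      then have "(v h - M/\<mu>) * exp (-\<mu>*(b-h)) \<le> (v h - M/\<mu>)" using False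
        by (simp add: mult_left_le)
      then show ?thesis using M_nn mu_pos by (smt (verit) divide_nonneg_pos)
    qed
    ultimately show "v b \<le> V" unfolding V_def by linarith
  qed
  define D where "D = M + \<mu> * V + 1"
  have vdD: "\<And>t. t > h \<Longrightarrow> \<bar>vd t\<bar> < D"
  proof -
    fix t :: real assume t: "t > h"
    have "0 \<le> v t" "v t \<le> V" using nn vV t h_pos by auto
    moreover have "0 \<le> J t" "J t \<le> M" using Jnn JM t h_pos by auto
    moreover have "0 \<le> \<mu> * v t" "\<mu> * v t \<le> \<mu> * V" using calculation(1,2) mu_pos
      by (simp_all add: mult_left_mono)
    ultimately show "\<bar>vd t\<bar> < D" unfolding vd_def D_def abs_less_iff by linarith
  qed
  define L where "L = (INF t\<in>{0..}. w t)"
  have bddw: "bdd_below (w ` {0..})" using nn h_pos by (intro bdd_belowI2[of _ 0]) auto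
  have L_le: "\<And>t. t \<ge> 0 \<Longrightarrow> L \<le> w t" unfolding L_def using bddw by (intro cINF_lower) auto
  have L_nn: "L \<ge> 0" unfolding L_def using nn h_pos by (intro cINF_greatest) auto
  have L_lim: "\<exists>T\<ge>0. \<forall>t\<ge>T. w t < L + e" if e: "e > 0" for e
  proof -
    have "\<exists>T\<ge>0. w T < L + e"
    proof (rule ccontr)
      assume "\<not> ?thesis"
      then have "L + e \<le> (INF t\<in>{0..}. w t)" by (intro cINF_greatest) (auto simp: not_less)
      then show False using e unfolding L_def by simp
    qed
    then obtain T where T: "T \<ge> 0" "w T < L + e" by auto
    then show ?thesis using wmono by (meson le_less_trans)
  qed
  have Dpos: "D > 0" using vdD[of "h+1"] by auto
  have V_nn: "V \<ge> 0" using vV[of h] nn[of h] h_pos by auto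
  have L0: "L = 0"
  proof (rule ccontr)
    assume "L \<noteq> 0"
    then have Lpos: "L > 0" using L_nn by simp
    have vlim: "\<exists>T. \<forall>t\<ge>T. v t < \<eta>" if eta: "\<eta> > 0" for \<eta>
    proof (rule ccontr)
      assume "\<not> ?thesis"
      then have ex: "\<forall>T. \<exists>t\<ge>T. v t \<ge> \<eta>" by (auto simp: not_less)
      obtain t1 where t1: "t1 \<ge> h" "v t1 \<ge> \<eta>" using ex by blast
      then have etaV: "\<eta> \<le> V" using vV by force
      have "\<exists>x\<in>{\<eta>/2..V}. \<forall>y\<in>{\<eta>/2..V}. q y \<le> q x"
        by (rule continuous_attains_sup) (use etaV eta Rm_neg in \<open>auto intro: continuous_on_subset[OF qcont]\<close>)
      then obtain x where x: "x \<in> {\<eta>/2..V}" "\<forall>y\<in>{\<eta>/2..V}. q y \<le> q x" by blast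
      define \<gamma> where "\<gamma> = - q x"
      have gam: "\<gamma> > 0" using x eta q_neg unfolding \<gamma>_def by auto
      define \<tau> where "\<tau> = \<eta> / (2*D)"
      have tau: "\<tau> > 0" using eta Dpos by (simp add: \<tau>_def)
      have "exp (\<gamma>*\<tau>) > 1" using gam tau by simp
      then have "L*exp(\<gamma>*\<tau>) - L > 0" using Lpos by simp
      then obtain T1 where T1: "T1 \<ge> 0" "\<forall>t\<ge>T1. w t < L + (L*exp(\<gamma>*\<tau>) - L)"
        using L_lim by blast
      obtain t where t: "t \<ge> max T1 (h+1)" "v t \<ge> \<eta>" using ex by blast
      have vlow: "v s \<ge> \<eta>/2" if s: "t \<le> s" "s \<le> t + \<tau>" for s
      proof -
        have "v t + D * t \<le> v s + D * s"
        proof (rule DERIV_nonneg_imp_increasing_open[OF s(1)])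
          show "continuous_on {t..s} (\<lambda>x. v x + D * x)" using contv t h_pos by (intro continuous_intros) auto
          fix x assume x: "t < x" "x < s"
          then have "x > h" using t by auto
          then have "((\<lambda>x. v x + D * x) has_real_derivative vd x + D) (at x)" using Dv h_pos
            by (auto intro!: derivative_eq_intros)
          moreover have "vd x + D \<ge> 0" using vdD[OF \<open>x>h\<close>] by auto
          ultimately show "\<exists>y. ((\<lambda>x. v x + D * x) has_real_derivative y) (at x) \<and> y \<ge> 0" by blast
        qed
        then have "v s \<ge> v t - D * (s-t)" by (simp add: algebra_simps)
        moreover have "D * (s-t) \<le> D * \<tau>" using s Dpos by (intro mult_left_mono) auto
        moreover have "D * \<tau> = \<eta>/2" using Dpos by (simp add: \<tau>_def)
        ultimately show "v s \<ge> \<eta>/2" using t by linarith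
      qed
      have "w (t+\<tau>) \<le> 0/\<gamma> + (w t - 0/\<gamma>) * exp(-\<gamma>*((t+\<tau>)-t))"
      proof (rule cmp_upper[where y'=wd])
        show "t \<le> t+\<tau>" using tau by simp
        show "\<gamma> > 0" by fact
        show "continuous_on {t..t+\<tau>} w" using contw t h_pos by auto
        fix s assume s: "t < s" "s < t+\<tau>"
        then have s0: "s > h" using t by auto
        show "(w has_real_derivative wd s) (at s)" using Dw s0 h_pos by auto
        have "v s \<in> {\<eta>/2..V}" using vlow[of s] vV[of s] s s0 by auto
        then have "q (v s) \<le> -\<gamma>" using x by (auto simp: \<gamma>_def)
        moreover have "w s \<ge> 0" using nn[of s] s0 h_pos by auto
        ultimately have "q (v s) * w s \<le> (-\<gamma>) * w s" by (rule mult_right_mono)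
        then show "wd s \<le> 0 - \<gamma> * w s" unfolding wd_def by simp
      qed
      then have "w (t+\<tau>) \<le> w t * exp(-\<gamma>*\<tau>)" by simp
      also have "\<dots> < (L*exp(\<gamma>*\<tau>)) * exp(-\<gamma>*\<tau>)" using T1 t by (intro mult_strict_right_mono) auto
      also have "\<dots> = L" by (simp add: mult.assoc flip: exp_add)
      finally show False using L_le[of "t+\<tau>"] t tau T1 by auto
    qed
    define \<kappa> where "\<kappa> = j (\<lambda>_. L) (\<lambda>_. 0)"
    have kap: "\<kappa> > 0" using const_pos Lpos by (simp add: \<kappa>_def)
    define B where "B = (\<lambda>t. (seg w t, seg v t)) ` {2*h<..} \<union> {((\<lambda>_. L), (\<lambda>_. 0))}"
    have BU: "B \<subseteq> Uplus h" using UP h_pos L_nn by (auto simp: B_def Uplus_def C1h_const)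
    have Bb: "bounded1 h B"
    proof -
      define K where "K = (w 0 + Mq * w 0) + (V + D) + L"
      have K1: "w 0 + Mq * w 0 \<ge> 0" using w0 Mq_nn by simp
      have "pnorm1 h a b \<le> K" if ab: "(a, b) \<in> B" for a b
      proof (cases "(a, b) = ((\<lambda>_. L), (\<lambda>_. 0))")
        case True
        have "norm0 h (\<lambda>_. L) \<le> L" using norm0_le[of h "\<lambda>_. L" L] h_pos L_nn by auto
        moreover have "norm0 h (derh h (\<lambda>_. L)) \<le> 0" using norm0_le[of h "derh h (\<lambda>_. L)" 0] h_pos derh_const by auto
        moreover have "norm0 h (\<lambda>_. 0) \<le> 0" using norm0_le[of h "\<lambda>_. 0" 0] h_pos by auto
        moreover have "norm0 h (derh h (\<lambda>_. 0)) \<le> 0" using norm0_le[of h "derh h (\<lambda>_. 0)" 0] h_pos derh_const by auto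
        ultimately show ?thesis using True K1 V_nn Dpos L_nn unfolding pnorm1_def norm1_def K_def by auto
      next
        case False
        then obtain t where t: "t > 2*h" "a = seg w t" "b = seg v t" using ab by (auto simp: B_def)
        then have th: "t > h" using h_pos by auto
        have "norm1 h (seg w t) \<le> w 0 + Mq * w 0" using nw1[OF th] .
        moreover have "norm1 h (seg v t) \<le> V + D"
        proof -
          have "norm0 h (seg v t) \<le> V"
            using norm0_le[of h "seg v t" V] h_pos vV nn t by (auto simp: seg_def)
          moreover have "norm0 h (derh h (seg v t)) \<le> D"
          proof -
            have "\<bar>derh h (seg v t) s\<bar> \<le> D" if s: "s \<in> {-h..0}" for s
              using dsegv[OF th s] vdD[of "t+s"] s t by auto
            then show ?thesis using norm0_le[of h _ D] h_pos by auto
          qed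
          ultimately show ?thesis unfolding norm1_def by linarith
        qed
        ultimately show ?thesis using t K1 V_nn Dpos L_nn unfolding pnorm1_def K_def by auto
      qed
      then show ?thesis unfolding bounded1_def by blast
    qed
    obtain Lp where Lp: "\<forall>(a, b)\<in>B. \<forall>(a', b')\<in>B.
        \<bar>j a b - j a' b'\<bar> \<le> Lp * pnorm0 h (\<lambda>s. a s - a' s) (\<lambda>s. b s - b' s)"
      using j_lip BU Bb unfolding j_lipschitz_bounded_def by blast
    have Lp': "\<bar>j a b - j a' b'\<bar> \<le> Lp * pnorm0 h (\<lambda>s. a s - a' s) (\<lambda>s. b s - b' s)"
      if "(a, b) \<in> B" "(a', b') \<in> B" for a b a' b'
      using Lp that by fast
    define e where "e = \<kappa> / (2 * (\<bar>Lp\<bar> + 1))"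
    have e: "e > 0" using kap by (simp add: e_def)
    have Le: "\<bar>Lp\<bar> * e \<le> \<kappa>/2"
    proof -
      have "\<bar>Lp\<bar> * e = (\<kappa>/2) * (\<bar>Lp\<bar> / (\<bar>Lp\<bar> + 1))" by (simp add: e_def field_simps)
      also have "\<dots> \<le> (\<kappa>/2) * 1" using kap by (intro mult_left_mono) auto
      finally show ?thesis by simp
    qed
    obtain T1 where T1: "T1 \<ge> 0" "\<forall>t\<ge>T1. w t < L + e" using L_lim[OF e] by blast
    obtain T2 where T2: "\<forall>t\<ge>T2. v t < e" using vlim[OF e] by blast
    define T where "T = max (max T1 T2) (2*h) + h + 1"
    have Jk: "J t \<ge> \<kappa>/2" if t: "t \<ge> T" for t
    proof -
      have tB: "(seg w t, seg v t) \<in> B" using t h_pos unfolding B_def T_def by auto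
      have cB: "((\<lambda>_. L), (\<lambda>_. 0)) \<in> B" unfolding B_def by auto
      have "\<bar>J t - \<kappa>\<bar> \<le> Lp * pnorm0 h (\<lambda>s. seg w t s - L) (\<lambda>s. seg v t s - 0)"
        using Lp'[OF tB cB] unfolding J_def \<kappa>_def by simp
      moreover have "0 \<le> pnorm0 h (\<lambda>s. seg w t s - L) (\<lambda>s. seg v t s - 0) \<and>
                     pnorm0 h (\<lambda>s. seg w t s - L) (\<lambda>s. seg v t s - 0) \<le> e"
      proof -
        have "\<bar>seg w t s - L\<bar> \<le> e \<and> \<bar>seg v t s - 0\<bar> \<le> e" if s: "s \<in> {-h..0}" for s
        proof -
          have ts: "t + s \<ge> T1" "t + s \<ge> T2" "t + s \<ge> 0" using s t h_pos unfolding T_def by auto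
          then show ?thesis using T1 T2 L_le[of "t+s"] nn[of "t+s"] h_pos unfolding seg_def
            by (auto simp: abs_le_iff less_imp_le)
        qed
        then have "0 \<le> norm0 h (\<lambda>s. seg w t s - L) \<and> norm0 h (\<lambda>s. seg w t s - L) \<le> e"
             "0 \<le> norm0 h (\<lambda>s. seg v t s - 0) \<and> norm0 h (\<lambda>s. seg v t s - 0) \<le> e"
          using norm0_le[of h _ e] h_pos by auto
        then show ?thesis unfolding pnorm0_def by auto
      qed
      moreover have "Lp * pnorm0 h (\<lambda>s. seg w t s - L) (\<lambda>s. seg v t s - 0) \<le> \<bar>Lp\<bar> * pnorm0 h (\<lambda>s. seg w t s - L) (\<lambda>s. seg v t s - 0)"
        using calculation(2) by (intro mult_right_mono) auto
      moreover have "\<bar>Lp\<bar> * pnorm0 h (\<lambda>s. seg w t s - L) (\<lambda>s. seg v t s - 0) \<le> \<bar>Lp\<bar> * e"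
        using calculation(2) by (intro mult_left_mono) auto
      ultimately have "\<bar>J t - \<kappa>\<bar> \<le> \<bar>Lp\<bar> * e" by linarith
      then show ?thesis using Le by (auto simp: abs_le_iff)
    qed
    obtain T3 where T3: "\<forall>t\<ge>T3. v t < \<kappa>/(4*\<mu>)" using vlim[of "\<kappa>/(4*\<mu>)"] kap mu_pos by auto
    define T' where "T' = max T T3"
    define b where "b = T' + 1/\<mu>"
    have Th: "T > h" using h_pos unfolding T_def by auto
    have "v b \<ge> (\<kappa>/2)/\<mu> + (v T' - (\<kappa>/2)/\<mu>) * exp (-\<mu>*(b-T'))"
    proof (rule cmp_lower[OF _ mu_pos contv])
      show "T' \<le> b" using mu_pos by (simp add: b_def)
      show "0 \<le> T'" using Th h_pos by (simp add: T'_def)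
      fix t assume t: "T' < t" "t < b"
      show "(v has_real_derivative vd t) (at t)" using Dv t Th h_pos by (auto simp: T'_def)
      show "vd t \<ge> \<kappa>/2 - \<mu> * v t" using Jk[of t] t by (auto simp: vd_def T'_def)
    qed
    moreover have "exp (-\<mu>*(b-T')) \<le> 1/2"
      using exp_neg_le[of 1] mu_pos by (simp add: b_def)
    moreover have "v T' \<ge> 0" using nn[of T'] Th h_pos by (simp add: T'_def)
    moreover have "(v T' - (\<kappa>/2)/\<mu>) * exp (-\<mu>*(b-T')) \<ge> (- ((\<kappa>/2)/\<mu>)) * exp (-\<mu>*(b-T'))"
      using calculation(3) by (intro mult_right_mono) auto
    moreover have "((\<kappa>/2)/\<mu>) * exp (-\<mu>*(b-T')) \<le> ((\<kappa>/2)/\<mu>) * (1/2)"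
      using calculation(2) kap mu_pos by (intro mult_left_mono) auto
    ultimately have "v b \<ge> (\<kappa>/2)/\<mu> - ((\<kappa>/2)/\<mu>) * (1/2)" by linarith
    moreover have "1/\<mu> > 0" using mu_pos by simp
    then have "b \<ge> T3" unfolding b_def T'_def by linarith
    then have "v b < \<kappa>/(4*\<mu>)" using T3 by blast
    ultimately show False by (simp add: field_simps)
  qed
  have wlim: "\<exists>T\<ge>0. \<forall>t\<ge>T. w t < e" if "e > 0" for e using L_lim[OF that] L0 by simp
  have Jlim: "\<exists>T\<ge>0. \<forall>t\<ge>T. J t \<le> e" if e: "e > 0" for e
  proof -
    obtain \<delta> where d: "\<delta> > 0" "\<forall>(a, b)\<in>Uplus h. norm0 h a \<le> \<delta> \<longrightarrow> j a b \<le> e"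
      using small e by blast
    obtain T where T: "T \<ge> 0" "\<forall>t\<ge>T. w t < \<delta>" using wlim[OF d(1)] by blast
    have "J t \<le> e" if t: "t \<ge> T + h" for t
    proof -
      have "\<bar>seg w t s\<bar> \<le> \<delta>" if s: "s \<in> {-h..0}" for s
        using T(2)[rule_format, of "t+s"] nn[of "t+s"] s t T(1) h_pos unfolding seg_def by auto
      then have "norm0 h (seg w t) \<le> \<delta>" using norm0_le[of h "seg w t" \<delta>] h_pos by auto
      moreover have "(seg w t, seg v t) \<in> Uplus h" using UP[of t t] t T h_pos by auto
      ultimately show ?thesis using d(2) unfolding J_def by auto
    qed
    then show ?thesis using T h_pos by (intro exI[of _ "T+h"]) auto
  qed
  have vlim: "\<exists>T. \<forall>t\<ge>T. v t \<le> e" if e: "e > 0" for e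
  proof -
    define c where "c = \<mu>*e/2"
    have c: "c > 0" "c/\<mu> = e/2" using e mu_pos by (auto simp: c_def)
    obtain T0 where T0: "T0 \<ge> 0" "\<forall>t\<ge>T0. J t \<le> c" using Jlim[OF c(1)] by auto
    define T where "T = T0 + h"
    have Th: "T > 0" "T \<ge> T0" using T0 h_pos by (auto simp: T_def)
    have vb: "v b \<le> c/\<mu> + (v T - c/\<mu>) * exp(-\<mu>*(b-T))" if b: "b \<ge> T" for b
    proof (rule cmp_upper[OF b mu_pos contv])
      show "0 \<le> T" using Th by simp
      fix t assume t: "T < t" "t < b"
      show "(v has_real_derivative vd t) (at t)" using Dv t Th by auto
      show "vd t \<le> c - \<mu> * v t" using T0 t Th unfolding vd_def by auto
    qed
    define b0 where "b0 = T + 2*\<bar>v T\<bar>/(e*\<mu>)"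
    have "v b \<le> e" if b: "b \<ge> b0" for b
    proof -
      have bT: "b \<ge> T" using b e mu_pos unfolding b0_def by (smt (verit) divide_nonneg_pos abs_ge_zero mult_pos_pos)
      define x where "x = \<mu>*(b-T)"
      have x0: "x \<ge> 0" using bT mu_pos by (simp add: x_def)
      have "\<mu>*(b-T) \<ge> \<mu>*(2*\<bar>v T\<bar>/(e*\<mu>))" using b mu_pos unfolding b0_def by (intro mult_left_mono) auto
      then have x1: "x \<ge> 2*\<bar>v T\<bar>/e" using mu_pos by (simp add: x_def)
      have E: "exp (-\<mu>*(b-T)) \<le> 1/(1+x)" using exp_neg_le[OF x0] by (simp add: x_def)
      have "(v T - c/\<mu>) * exp(-\<mu>*(b-T)) \<le> \<bar>v T\<bar> * exp(-\<mu>*(b-T))"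
        using c mu_pos by (intro mult_right_mono) (auto simp: abs_ge_self intro: order_trans[OF _ abs_ge_self])
      also have "\<dots> \<le> \<bar>v T\<bar> * (1/(1+x))" using E by (intro mult_left_mono) auto
      also have "\<dots> \<le> e/2"
      proof -
        have "e/2 * x \<ge> e/2 * (2*\<bar>v T\<bar>/e)" using x1 e by (intro mult_left_mono) auto
        then have "e/2 * x \<ge> \<bar>v T\<bar>" using e by simp
        then have "\<bar>v T\<bar> \<le> e/2 * (1+x)" using e by (simp add: algebra_simps)
        then show ?thesis using x0 by (simp add: pos_divide_le_eq)
      qed
      finally show ?thesis using vb[OF bT] c(2) by linarith
    qed
    then show ?thesis by blast
  qed
  have derlim: "\<exists>T>h. \<forall>u\<ge>T. \<bar>w u\<bar> \<le> e \<and> \<bar>v u\<bar> \<le> e \<and> \<bar>wd u\<bar> \<le> e \<and> \<bar>vd u\<bar> \<le> e" if e: "e > 0" for e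
  proof -
    define e1 where "e1 = e / (Mq + \<mu> + 1)"
    have e1: "e1 > 0" "(Mq + \<mu> + 1) * e1 = e" using e Mq_nn mu_pos by (auto simp: e1_def)
    obtain T1 where T1: "T1 \<ge> 0" "\<forall>t\<ge>T1. w t < e1" using wlim[OF e1(1)] by blast
    obtain T2 where T2: "\<forall>t\<ge>T2. v t \<le> e1" using vlim[OF e1(1)] by blast
    obtain T3 where T3: "T3 \<ge> 0" "\<forall>t\<ge>T3. J t \<le> e1" using Jlim[OF e1(1)] by blast
    define T where "T = max (max T1 T2) (max T3 h) + 1"
    have "\<bar>w u\<bar> \<le> e \<and> \<bar>v u\<bar> \<le> e \<and> \<bar>wd u\<bar> \<le> e \<and> \<bar>vd u\<bar> \<le> e" if u: "u \<ge> T" for u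
    proof -
      have u0: "u \<ge> 0" "u \<ge> T1" "u \<ge> T2" "u \<ge> T3" using u h_pos unfolding T_def by auto
      have a: "0 \<le> w u" "w u \<le> e1" "0 \<le> v u" "v u \<le> e1" "0 \<le> J u" "J u \<le> e1"
        using nn[of u] T1 T2 T3 u0 Jnn[of u] h_pos by (auto simp: less_imp_le)
      have "Mq * e1 \<le> e" "e1 \<le> e" "e1 + \<mu> * e1 \<le> e" using e1 Mq_nn mu_pos by (auto simp: algebra_simps)
      moreover have "\<bar>wd u\<bar> \<le> Mq * e1"
        using wd_le[of u] u0 h_pos a Mq_nn by (smt (verit) mult_left_mono)
      moreover have "\<mu> * v u \<le> \<mu> * e1" "0 \<le> \<mu> * v u" using a mu_pos by (auto intro: mult_left_mono)
      ultimately show ?thesis using a unfolding vd_def by (auto simp: abs_le_iff)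
    qed
    moreover have "T > h" unfolding T_def by auto
    ultimately show ?thesis by blast
  qed
  have segb: "\<exists>N. \<forall>t\<ge>N. 0 \<le> pnorm0 h (seg w t) (seg v t) \<and> pnorm0 h (seg w t) (seg v t) \<le> e
      \<and> 0 \<le> pnorm1 h (seg w t) (seg v t) \<and> pnorm1 h (seg w t) (seg v t) \<le> 2*e" if e: "e > 0" for e
  proof -
    obtain T where T: "T > h" "\<forall>u\<ge>T. \<bar>w u\<bar> \<le> e \<and> \<bar>v u\<bar> \<le> e \<and> \<bar>wd u\<bar> \<le> e \<and> \<bar>vd u\<bar> \<le> e"
      using derlim[OF e] by blast
    have "0 \<le> pnorm0 h (seg w t) (seg v t) \<and> pnorm0 h (seg w t) (seg v t) \<le> e
      \<and> 0 \<le> pnorm1 h (seg w t) (seg v t) \<and> pnorm1 h (seg w t) (seg v t) \<le> 2*e" if t: "t \<ge> T + h" for t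
    proof -
      have th: "t > h" using t T h_pos by auto
      have pt: "\<bar>w (t+s)\<bar> \<le> e \<and> \<bar>v (t+s)\<bar> \<le> e \<and> \<bar>wd (t+s)\<bar> \<le> e \<and> \<bar>vd (t+s)\<bar> \<le> e"
        if s: "s \<in> {-h..0}" for s
        using T(2) s t by auto
      have n1: "0 \<le> norm0 h (seg w t) \<and> norm0 h (seg w t) \<le> e"
        using norm0_le[of h "seg w t" e] pt h_pos by (auto simp: seg_def)
      have n2: "0 \<le> norm0 h (seg v t) \<and> norm0 h (seg v t) \<le> e"
        using norm0_le[of h "seg v t" e] pt h_pos by (auto simp: seg_def)
      have n3: "0 \<le> norm0 h (derh h (seg w t)) \<and> norm0 h (derh h (seg w t)) \<le> e"
        using norm0_le[of h "derh h (seg w t)" e] pt h_pos dsegw[OF th] by auto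
      have n4: "0 \<le> norm0 h (derh h (seg v t)) \<and> norm0 h (derh h (seg v t)) \<le> e"
        using norm0_le[of h "derh h (seg v t)" e] pt h_pos dsegv[OF th] by auto
      show ?thesis using n1 n2 n3 n4 unfolding pnorm0_def pnorm1_def norm1_def by auto
    qed
    then show ?thesis by blast
  qed
  show ?thesis
  proof
    show "((\<lambda>t. pnorm0 h (seg w t) (seg v t)) \<longlongrightarrow> 0) at_top"
      unfolding tendsto_iff eventually_at_top_linorder dist_real_def
    proof (intro allI impI)
      fix e :: real assume e: "e > 0"
      obtain N where N: "\<forall>t\<ge>N. 0 \<le> pnorm0 h (seg w t) (seg v t) \<and> pnorm0 h (seg w t) (seg v t) \<le> e/2
         \<and> 0 \<le> pnorm1 h (seg w t) (seg v t) \<and> pnorm1 h (seg w t) (seg v t) \<le> 2*(e/2)"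
        using segb[of "e/2"] e by auto
      show "\<exists>N. \<forall>t\<ge>N. \<bar>pnorm0 h (seg w t) (seg v t) - 0\<bar> < e"
        using N e by (intro exI[of _ N]) auto
    qed
    show "((\<lambda>t. pnorm1 h (seg w t) (seg v t)) \<longlongrightarrow> 0) at_top"
      unfolding tendsto_iff eventually_at_top_linorder dist_real_def
    proof (intro allI impI)
      fix e :: real assume e: "e > 0"
      obtain N where N: "\<forall>t\<ge>N. 0 \<le> pnorm1 h (seg w t) (seg v t) \<and> pnorm1 h (seg w t) (seg v t) \<le> 2*(e/4)"
        using segb[of "e/4"] e by auto
      show "\<exists>N. \<forall>t\<ge>N. \<bar>pnorm1 h (seg w t) (seg v t) - 0\<bar> < e"
        using N e by (intro exI[of _ N]) auto
    qed
  qed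
qed

end
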